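(* Let $V=V_1\oplus V_2\oplus V_4$ and $R=\mathcal{O}(V)^{\mathrm{SL}_2(\mathbb{C})}$. Then $R$ has no homogeneous system of parameters with degrees $2,2,3,3,3,4,5$; indeed, all invariants of degrees $2$ up to $5$ vanish at $(x,0,4xy^3)$, which is not in the nullcone of $V$.
   Context: $V_k$ is the $\mathrm{SL}_2(\mathbb{C})$-module of complex binary forms of degree $k$ in $x,y$; $R$ is the graded algebra of invariant polynomial functions on $V$. A homogeneous system of parameters is a set of algebraically independent homogeneous elements of positive degree over whose generated subalgebra $R$ is integral. The nullcone of $V$ is the set of points of $V$ at which all homogeneous invariants of positive degree vanish. *)

theory Defs
  imports Complex_Main
begin

text \<open>Points of V = V_1 + V_2 + V_4 are coordinate vectors v :: nat => complex, of which
 only the indices 0..9 matter: v 0, v 1 are the coefficients of the linear form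
 v0 x + v1 y; v 2, v 3, v 4 those of the quadratic form (coefficient of x^(2-j) y^j is v (2+j));
 v 5 .. v 9 those of the quartic form (coefficient of x^(4-j) y^j is v (5+j)).\<close>

definition binform :: "nat \<Rightarrow> (nat \<Rightarrow> complex) \<Rightarrow> complex \<Rightarrow> complex \<Rightarrow> complex" where
  "binform k a x y = (\<Sum>j\<le>k. a j * x ^ (k - j) * y ^ j)"

definition form1 :: "(nat \<Rightarrow> complex) \<Rightarrow> complex \<Rightarrow> complex \<Rightarrow> complex" where
  "form1 v = binform 1 (\<lambda>j. v j)"
definition form2 :: "(nat \<Rightarrow> complex) \<Rightarrow> complex \<Rightarrow> complex \<Rightarrow> complex" where
  "form2 v = binform 2 (\<lambda>j. v (2 + j))"
definition form4 :: "(nat \<Rightarrow> complex) \<Rightarrow> complex \<Rightarrow> complex \<Rightarrow> complex" where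
  "form4 v = binform 4 (\<lambda>j. v (5 + j))"

text \<open>SL_2(C): matrices (a,b,c,d) = [[a,b],[c,d]] with determinant 1. The action on binary
 forms is by linear substitution of the variables: w = g.v iff each form of w is the
 corresponding form of v precomposed with g.\<close>

definition SL2 :: "(complex \<times> complex \<times> complex \<times> complex) set" where
  "SL2 = {(a, b, c, d). a * d - b * c = 1}"

definition act_rel :: "complex \<times> complex \<times> complex \<times> complex \<Rightarrow> (nat \<Rightarrow> complex) \<Rightarrow> (nat \<Rightarrow> complex) \<Rightarrow> bool" where
  "act_rel g v w = (case g of (a, b, c, d) \<Rightarrow>
     (\<forall>x y. form1 w x y = form1 v (a * x + b * y) (c * x + d * y)
          \<and> form2 w x y = form2 v (a * x + b * y) (c * x + d * y)
          \<and> form4 w x y = form4 v (a * x + b * y) (c * x + d * y)))"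

definition mono_sum :: "nat \<Rightarrow> (nat \<Rightarrow> nat) set \<Rightarrow> ((nat \<Rightarrow> nat) \<Rightarrow> complex) \<Rightarrow> (nat \<Rightarrow> complex) \<Rightarrow> complex" where
  "mono_sum n A c v = (\<Sum>\<alpha>\<in>A. c \<alpha> * (\<Prod>i<n. v i ^ \<alpha> i))"

definition poly_fun :: "nat \<Rightarrow> ((nat \<Rightarrow> complex) \<Rightarrow> complex) set" where
  "poly_fun n = {f. \<exists>A c. finite A \<and> (\<forall>\<alpha>\<in>A. \<forall>i\<ge>n. \<alpha> i = 0) \<and> f = mono_sum n A c}"

definition homog_poly :: "nat \<Rightarrow> nat \<Rightarrow> ((nat \<Rightarrow> complex) \<Rightarrow> complex) \<Rightarrow> bool" where
  "homog_poly n d f = (\<exists>A c. finite A \<and> (\<forall>\<alpha>\<in>A. (\<forall>i\<ge>n. \<alpha> i = 0) \<and> (\<Sum>i<n. \<alpha> i) = d)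
                          \<and> f = mono_sum n A c)"

definition inv_ring :: "((nat \<Rightarrow> complex) \<Rightarrow> complex) set" where
  "inv_ring = {f \<in> poly_fun 10. \<forall>g\<in>SL2. \<forall>v w. act_rel g v w \<longrightarrow> f w = f v}"

definition poly_comp :: "((nat \<Rightarrow> complex) \<Rightarrow> complex) list \<Rightarrow> (nat \<Rightarrow> nat) set
     \<Rightarrow> ((nat \<Rightarrow> nat) \<Rightarrow> complex) \<Rightarrow> (nat \<Rightarrow> complex) \<Rightarrow> complex" where
  "poly_comp fs A c v = (\<Sum>\<alpha>\<in>A. c \<alpha> * (\<Prod>i<length fs. (fs ! i) v ^ \<alpha> i))"

definition alg_indep :: "((nat \<Rightarrow> complex) \<Rightarrow> complex) list \<Rightarrow> bool" where
  "alg_indep fs = (\<forall>A c. finite A \<and> (\<forall>\<alpha>\<in>A. \<forall>i\<ge>length fs. \<alpha> i = 0)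
        \<and> (\<forall>v. poly_comp fs A c v = 0) \<longrightarrow> (\<forall>\<alpha>\<in>A. c \<alpha> = 0))"

definition gen_alg :: "((nat \<Rightarrow> complex) \<Rightarrow> complex) list \<Rightarrow> ((nat \<Rightarrow> complex) \<Rightarrow> complex) set" where
  "gen_alg fs = {poly_comp fs A c | A c. finite A}"

definition integral_over :: "((nat \<Rightarrow> complex) \<Rightarrow> complex) set \<Rightarrow> ((nat \<Rightarrow> complex) \<Rightarrow> complex) \<Rightarrow> bool" where
  "integral_over S f = (\<exists>n cs. (\<forall>j<n. cs j \<in> S) \<and> (\<forall>v. f v ^ n + (\<Sum>j<n. cs j v * f v ^ j) = 0))"

definition is_hsop :: "((nat \<Rightarrow> complex) \<Rightarrow> complex) list \<Rightarrow> bool" where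
  "is_hsop fs = ((\<forall>f\<in>set fs. f \<in> inv_ring \<and> (\<exists>d>0. homog_poly 10 d f))
      \<and> alg_indep fs \<and> (\<forall>f\<in>inv_ring. integral_over (gen_alg fs) f))"

definition nullcone :: "(nat \<Rightarrow> complex) set" where
  "nullcone = {v. \<forall>f\<in>inv_ring. \<forall>d>0. homog_poly 10 d f \<longrightarrow> f v = 0}"

text \<open>The point (x, 0, 4 x y^3) of V.\<close>

definition p0 :: "nat \<Rightarrow> complex" where
  "p0 = (\<lambda>i. if i = 0 then 1 else if i = 8 then 4 else 0)"

end

theory Submission
  imports Defs "HOL-Computational_Algebra.Polynomial"
begin


lemma binform_coeff:
  assumes "\<forall>x y. binform k a x y = binform k b x y" and "j \<le> k"
  shows "a j = b j"
proof -
  define P where "P a = (\<Sum>i\<le>k. monom (a i) (k - i))" for a :: "nat \<Rightarrow> complex"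
  have ev: "poly (P a) x = binform k a x 1" for a x
    by (simp add: P_def binform_def poly_sum poly_monom)
  have "poly (P a) = poly (P b)" using assms(1) by (auto simp: ev)
  hence eq: "P a = P b" by (simp add: poly_eq_poly_eq_iff)
  have cf: "coeff (P a) (k - j) = a j" for a
  proof -
    have "coeff (P a) (k - j) = (\<Sum>i\<le>k. if k - i = k - j then a i else 0)"
      by (simp add: P_def coeff_sum coeff_monom)
    also have "\<dots> = (\<Sum>i\<in>{j}. a i)"
      by (rule sum.mono_neutral_cong_right) (use assms(2) in auto)
    finally show ?thesis by simp
  qed
  show ?thesis using cf[of a] cf[of b] eq by simp
qed



lemma binform1_eq: "binform 1 a x y = a 0 * x + a 1 * y"
  by (simp add: binform_def)
lemma binform2_eq: "binform 2 a x y = a 0 * x^2 + a 1 * x * y + a 2 * y^2"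
  by (simp add: binform_def eval_nat_numeral atMost_Suc algebra_simps)
lemma binform4_eq: "binform 4 a x y = a 0 * x^4 + a 1 * x^3 * y + a 2 * x^2 * y^2 + a 3 * x * y^3 + a 4 * y^4"
  by (simp add: binform_def eval_nat_numeral atMost_Suc algebra_simps)

lemma act_coords:
  assumes "act_rel (a,b,c,d) v w"
  shows "w 0 = a * v 0 + c * v 1" "w 1 = b * v 0 + d * v 1"
  "w 5 = a^4*v 5 + a^3*c*v 6 + a^2*c^2*v 7 + a*c^3*v 8 + c^4*v 9"
  "w 6 = 4*a^3*b*v 5 + a^3*d*v 6 + 3*a^2*b*c*v 6 + 2*a^2*c*d*v 7 + 2*a*b*c^2*v 7 + 3*a*c^2*d*v 8 + b*c^3*v 8 + 4*c^3*d*v 9"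
  "w 7 = 6*a^2*b^2*v 5 + 3*a^2*b*d*v 6 + 3*a*b^2*c*v 6 + a^2*d^2*v 7 + 4*a*b*c*d*v 7 + b^2*c^2*v 7 + 3*a*c*d^2*v 8 + 3*b*c^2*d*v 8 + 6*c^2*d^2*v 9"
  "w 8 = 4*a*b^3*v 5 + 3*a*b^2*d*v 6 + b^3*c*v 6 + 2*a*b*d^2*v 7 + 2*b^2*c*d*v 7 + a*d^3*v 8 + 3*b*c*d^2*v 8 + 4*c*d^3*v 9"
  "w 9 = b^4*v 5 + b^3*d*v 6 + b^2*d^2*v 7 + b*d^3*v 8 + d^4*v 9"
proof -
  define W1 where "W1 = (\<lambda>j::nat. if j = 0 then a * v 0 + c * v 1 else b * v 0 + d * v 1)"
  have h1: "\<forall>x y. binform 1 (\<lambda>j. w j) x y = binform 1 W1 x y"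
  proof (intro allI)
    fix x y
    have "binform 1 (\<lambda>j. w j) x y = form1 v (a * x + b * y) (c * x + d * y)"
      using assms unfolding act_rel_def form1_def by auto
    also have "\<dots> = binform 1 W1 x y" unfolding form1_def binform1_eq W1_def by (simp add: algebra_simps)
    finally show "binform 1 (\<lambda>j. w j) x y = binform 1 W1 x y" .
  qed
  show "w 0 = a * v 0 + c * v 1" using binform_coeff[OF h1, of 0] by (simp add: W1_def)
  show "w 1 = b * v 0 + d * v 1" using binform_coeff[OF h1, of 1] by (simp add: W1_def)
  define W4 where "W4 = (\<lambda>j::nat. if j = 0 then a^4*v 5 + a^3*c*v 6 + a^2*c^2*v 7 + a*c^3*v 8 + c^4*v 9
   else if j = 1 then 4*a^3*b*v 5 + a^3*d*v 6 + 3*a^2*b*c*v 6 + 2*a^2*c*d*v 7 + 2*a*b*c^2*v 7 + 3*a*c^2*d*v 8 + b*c^3*v 8 + 4*c^3*d*v 9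
   else if j = 2 then 6*a^2*b^2*v 5 + 3*a^2*b*d*v 6 + 3*a*b^2*c*v 6 + a^2*d^2*v 7 + 4*a*b*c*d*v 7 + b^2*c^2*v 7 + 3*a*c*d^2*v 8 + 3*b*c^2*d*v 8 + 6*c^2*d^2*v 9
   else if j = 3 then 4*a*b^3*v 5 + 3*a*b^2*d*v 6 + b^3*c*v 6 + 2*a*b*d^2*v 7 + 2*b^2*c*d*v 7 + a*d^3*v 8 + 3*b*c*d^2*v 8 + 4*c*d^3*v 9
   else b^4*v 5 + b^3*d*v 6 + b^2*d^2*v 7 + b*d^3*v 8 + d^4*v 9)"
  have h4: "\<forall>x y. binform 4 (\<lambda>j. w (5 + j)) x y = binform 4 W4 x y"
  proof (intro allI)
    fix x y
    have "binform 4 (\<lambda>j. w (5 + j)) x y = form4 v (a * x + b * y) (c * x + d * y)"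
      using assms unfolding act_rel_def form4_def by auto
    also have "\<dots> = binform 4 W4 x y" unfolding form4_def binform4_eq W4_def
      by (simp add: algebra_simps power2_eq_square power3_eq_cube power4_eq_xxxx)
    finally show "binform 4 (\<lambda>j. w (5 + j)) x y = binform 4 W4 x y" .
  qed
  show "w 5 = a^4*v 5 + a^3*c*v 6 + a^2*c^2*v 7 + a*c^3*v 8 + c^4*v 9"
    using binform_coeff[OF h4, of 0] by (simp add: W4_def)
  show "w 6 = 4*a^3*b*v 5 + a^3*d*v 6 + 3*a^2*b*c*v 6 + 2*a^2*c*d*v 7 + 2*a*b*c^2*v 7 + 3*a*c^2*d*v 8 + b*c^3*v 8 + 4*c^3*d*v 9"
    using binform_coeff[OF h4, of 1] by (simp add: W4_def)
  show "w 7 = 6*a^2*b^2*v 5 + 3*a^2*b*d*v 6 + 3*a*b^2*c*v 6 + a^2*d^2*v 7 + 4*a*b*c*d*v 7 + b^2*c^2*v 7 + 3*a*c*d^2*v 8 + 3*b*c^2*d*v 8 + 6*c^2*d^2*v 9"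
    using binform_coeff[OF h4, of 2] by (simp add: W4_def)
  show "w 8 = 4*a*b^3*v 5 + 3*a*b^2*d*v 6 + b^3*c*v 6 + 2*a*b*d^2*v 7 + 2*b^2*c*d*v 7 + a*d^3*v 8 + 3*b*c*d^2*v 8 + 4*c*d^3*v 9"
    using binform_coeff[OF h4, of 3] by (simp add: W4_def)
  show "w 9 = b^4*v 5 + b^3*d*v 6 + b^2*d^2*v 7 + b*d^3*v 8 + d^4*v 9"
    using binform_coeff[OF h4, of 4] by (simp add: W4_def)
qed



definition qq0 :: "(nat \<Rightarrow> complex) \<Rightarrow> complex" where
  "qq0 v = 12 * v 1^2 * v 5 - 6 * v 0 * v 1 * v 6 + 2 * v 0^2 * v 7"
definition qq1 :: "(nat \<Rightarrow> complex) \<Rightarrow> complex" where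
  "qq1 v = 6 * v 1^2 * v 6 - 8 * v 0 * v 1 * v 7 + 6 * v 0^2 * v 8"
definition qq2 :: "(nat \<Rightarrow> complex) \<Rightarrow> complex" where
  "qq2 v = 2 * v 1^2 * v 7 - 6 * v 0 * v 1 * v 8 + 12 * v 0^2 * v 9"
definition Delta :: "(nat \<Rightarrow> complex) \<Rightarrow> complex" where
  "Delta v = qq1 v ^ 2 - 4 * qq0 v * qq2 v"

lemma Delta_inv:
  assumes "act_rel (a,b,c,d) v w" "a * d - b * c = 1"
  shows "Delta w = Delta v"
proof -
  note W = act_coords[OF assms(1)]
  have e0: "qq0 w = (a*d-b*c)^2 * (qq0 v * a^2 + qq1 v * a * c + qq2 v * c^2)"
    unfolding qq0_def qq1_def qq2_def W by algebra
  have e1: "qq1 w = (a*d-b*c)^2 * (2 * qq0 v * a * b + qq1 v * (a * d + b * c) + 2 * qq2 v * c * d)"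
    unfolding qq0_def qq1_def qq2_def W by algebra
  have e2: "qq2 w = (a*d-b*c)^2 * (qq0 v * b^2 + qq1 v * b * d + qq2 v * d^2)"
    unfolding qq0_def qq1_def qq2_def W by algebra
  have "Delta w = (a*d-b*c)^6 * Delta v"
    unfolding Delta_def e0 e1 e2 by algebra
  thus ?thesis using assms(2) by simp
qed



lemma homog_var: assumes "i < n" shows "homog_poly n 1 (\<lambda>v. v i)"
proof -
  let ?a = "\<lambda>k::nat. if k = i then 1 else (0::nat)"
  have p: "(\<Prod>k<n. v k ^ ?a k) = v i" for v :: "nat \<Rightarrow> complex"
  proof -
    have "(\<Prod>k<n. v k ^ ?a k) = (\<Prod>k\<in>{i}. v k ^ ?a k)"
      by (rule prod.mono_neutral_cong_right) (use assms in auto)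
    thus ?thesis by simp
  qed
  have s: "(\<Sum>k<n. ?a k) = 1"
  proof -
    have "(\<Sum>k<n. ?a k) = (\<Sum>k\<in>{i}. ?a k)"
      by (rule sum.mono_neutral_cong_right) (use assms in auto)
    thus ?thesis by simp
  qed
  show ?thesis unfolding homog_poly_def
    apply (rule exI[of _ "{?a}"], rule exI[of _ "\<lambda>_. 1"])
    using assms s by (auto simp: mono_sum_def p)
qed

lemma homog_smult: assumes "homog_poly n d f" shows "homog_poly n d (\<lambda>v. k * f v)"
proof -
  obtain A c where "finite A" "\<forall>\<alpha>\<in>A. (\<forall>i\<ge>n. \<alpha> i = 0) \<and> (\<Sum>i<n. \<alpha> i) = d" "f = mono_sum n A c"
    using assms unfolding homog_poly_def by blast
  thus ?thesis unfolding homog_poly_def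
    by (intro exI[of _ A] exI[of _ "\<lambda>a. k * c a"]) (auto simp: mono_sum_def sum_distrib_left mult.assoc)
qed

lemma homog_add: assumes "homog_poly n d f" "homog_poly n d g" shows "homog_poly n d (\<lambda>v. f v + g v)"
proof -
  obtain A c where A: "finite A" "\<forall>\<alpha>\<in>A. (\<forall>i\<ge>n. \<alpha> i = 0) \<and> (\<Sum>i<n. \<alpha> i) = d" "f = mono_sum n A c"
    using assms(1) unfolding homog_poly_def by blast
  obtain B e where B: "finite B" "\<forall>\<alpha>\<in>B. (\<forall>i\<ge>n. \<alpha> i = 0) \<and> (\<Sum>i<n. \<alpha> i) = d" "g = mono_sum n B e"
    using assms(2) unfolding homog_poly_def by blast
  define ce where "ce \<alpha> = (if \<alpha> \<in> A then c \<alpha> else 0) + (if \<alpha> \<in> B then e \<alpha> else 0)" for \<alpha>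
  have "mono_sum n A c v + mono_sum n B e v = mono_sum n (A \<union> B) ce v" for v
  proof -
    have 1: "mono_sum n A c v = (\<Sum>\<alpha>\<in>A \<union> B. (if \<alpha> \<in> A then c \<alpha> else 0) * (\<Prod>i<n. v i ^ \<alpha> i))"
      unfolding mono_sum_def by (rule sum.mono_neutral_cong_left) (use A B in auto)
    have 2: "mono_sum n B e v = (\<Sum>\<alpha>\<in>A \<union> B. (if \<alpha> \<in> B then e \<alpha> else 0) * (\<Prod>i<n. v i ^ \<alpha> i))"
      unfolding mono_sum_def by (rule sum.mono_neutral_cong_left) (use A B in auto)
    show ?thesis
      by (subst 1, subst 2) (simp add: mono_sum_def ce_def sum.distrib[symmetric] distrib_right)
  qed
  thus ?thesis unfolding homog_poly_def using A B
    by (intro exI[of _ "A \<union> B"] exI[of _ ce]) auto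
qed

lemma homog_mult: assumes "homog_poly n d1 f" "homog_poly n d2 g" "d = d1 + d2"
  shows "homog_poly n d (\<lambda>v. f v * g v)"
proof -
  obtain A c where A: "finite A" "\<forall>\<alpha>\<in>A. (\<forall>i\<ge>n. \<alpha> i = 0) \<and> (\<Sum>i<n. \<alpha> i) = d1" "f = mono_sum n A c"
    using assms(1) unfolding homog_poly_def by blast
  obtain B e where B: "finite B" "\<forall>\<alpha>\<in>B. (\<forall>i\<ge>n. \<alpha> i = 0) \<and> (\<Sum>i<n. \<alpha> i) = d2" "g = mono_sum n B e"
    using assms(2) unfolding homog_poly_def by blast
  define pl where "pl = (\<lambda>(\<alpha>::nat\<Rightarrow>nat, \<beta>::nat\<Rightarrow>nat). (\<lambda>i. \<alpha> i + \<beta> i))"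
  define C where "C = pl ` (A \<times> B)"
  define cc where "cc \<gamma> = (\<Sum>p\<in>{p. p \<in> A \<times> B \<and> pl p = \<gamma>}. c (fst p) * e (snd p))" for \<gamma>
  have fin: "finite (A \<times> B)" using A B by auto
  have "mono_sum n A c v * mono_sum n B e v = mono_sum n C cc v" for v
  proof -
    let ?M = "\<lambda>\<gamma>. (\<Prod>i<n. v i ^ \<gamma> i)"
    have "mono_sum n A c v * mono_sum n B e v = (\<Sum>\<alpha>\<in>A. \<Sum>\<beta>\<in>B. (c \<alpha> * ?M \<alpha>) * (e \<beta> * ?M \<beta>))"
      unfolding mono_sum_def by (rule sum_product)
    also have "\<dots> = (\<Sum>p\<in>A \<times> B. c (fst p) * e (snd p) * ?M (pl p))"
      unfolding sum.cartesian_product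
      by (rule sum.cong) (auto simp: pl_def power_add prod.distrib)
    also have "\<dots> = (\<Sum>\<gamma>\<in>C. \<Sum>p\<in>{p. p \<in> A \<times> B \<and> pl p = \<gamma>}. c (fst p) * e (snd p) * ?M (pl p))"
      unfolding C_def by (rule sum.image_gen[OF fin])
    also have "\<dots> = (\<Sum>\<gamma>\<in>C. cc \<gamma> * ?M \<gamma>)"
      unfolding cc_def sum_distrib_right by (rule sum.cong) auto
    finally show ?thesis unfolding mono_sum_def .
  qed
  moreover have "finite C" using fin C_def by auto
  moreover have "\<forall>\<gamma>\<in>C. (\<forall>i\<ge>n. \<gamma> i = 0) \<and> (\<Sum>i<n. \<gamma> i) = d"
    using A(2) B(2) assms(3) by (auto simp: C_def pl_def sum.distrib)
  ultimately show ?thesis unfolding homog_poly_def using A B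
    by (intro exI[of _ C] exI[of _ cc]) auto
qed

lemma homog_scale: assumes "homog_poly n d f" shows "f (\<lambda>i. t * v i) = t ^ d * f v"
proof -
  obtain A c where A: "finite A" "\<forall>\<alpha>\<in>A. (\<forall>i\<ge>n. \<alpha> i = 0) \<and> (\<Sum>i<n. \<alpha> i) = d" "f = mono_sum n A c"
    using assms unfolding homog_poly_def by blast
  have "(\<Prod>i<n. (t * v i) ^ \<alpha> i) = t ^ d * (\<Prod>i<n. v i ^ \<alpha> i)" if "\<alpha> \<in> A" for \<alpha>
    using A(2) that by (simp add: power_mult_distrib prod.distrib power_sum[symmetric])
  thus ?thesis unfolding A(3) mono_sum_def by (simp add: sum_distrib_left algebra_simps)
qed

lemma homog_poly_fun: "homog_poly n d f \<Longrightarrow> f \<in> poly_fun n"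
  unfolding homog_poly_def poly_fun_def by blast

lemma homog_Delta: "homog_poly 10 6 Delta"
proof -
  have v: "homog_poly 10 1 (\<lambda>v. v i)" if "i < 10" for i using homog_var that by simp
  have m3: "homog_poly 10 3 (\<lambda>v. k * (v i * (v j * v l)))" if "i < 10" "j < 10" "l < 10" for i j l k
    by (rule homog_smult, rule homog_mult[OF v[OF that(1)] homog_mult[OF v[OF that(2)] v[OF that(3)]]]) auto
  have q0: "homog_poly 10 3 qq0"
  proof -
    have "homog_poly 10 3 (\<lambda>v. 12 * (v 1 * (v 1 * v 5)) + ((-6) * (v 0 * (v 1 * v 6)) + 2 * (v 0 * (v 0 * v 7))))"
      by (intro homog_add m3) auto
    moreover have "qq0 = (\<lambda>v. 12 * (v 1 * (v 1 * v 5)) + ((-6) * (v 0 * (v 1 * v 6)) + 2 * (v 0 * (v 0 * v 7))))"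
      by (auto simp: qq0_def power2_eq_square algebra_simps)
    ultimately show ?thesis by simp
  qed
  have q1: "homog_poly 10 3 qq1"
  proof -
    have "homog_poly 10 3 (\<lambda>v. 6 * (v 1 * (v 1 * v 6)) + ((-8) * (v 0 * (v 1 * v 7)) + 6 * (v 0 * (v 0 * v 8))))"
      by (intro homog_add m3) auto
    moreover have "qq1 = (\<lambda>v. 6 * (v 1 * (v 1 * v 6)) + ((-8) * (v 0 * (v 1 * v 7)) + 6 * (v 0 * (v 0 * v 8))))"
      by (auto simp: qq1_def power2_eq_square algebra_simps)
    ultimately show ?thesis by simp
  qed
  have q2: "homog_poly 10 3 qq2"
  proof -
    have "homog_poly 10 3 (\<lambda>v. 2 * (v 1 * (v 1 * v 7)) + ((-6) * (v 0 * (v 1 * v 8)) + 12 * (v 0 * (v 0 * v 9))))"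
      by (intro homog_add m3) auto
    moreover have "qq2 = (\<lambda>v. 2 * (v 1 * (v 1 * v 7)) + ((-6) * (v 0 * (v 1 * v 8)) + 12 * (v 0 * (v 0 * v 9))))"
      by (auto simp: qq2_def power2_eq_square algebra_simps)
    ultimately show ?thesis by simp
  qed
  have "homog_poly 10 6 (\<lambda>v. qq1 v * qq1 v + (-4) * (qq0 v * qq2 v))"
    by (intro homog_add homog_smult homog_mult[OF q1 q1] homog_mult[OF q0 q2]) auto
  moreover have "Delta = (\<lambda>v. qq1 v * qq1 v + (-4) * (qq0 v * qq2 v))"
    by (auto simp: Delta_def power2_eq_square)
  ultimately show ?thesis by simp
qed

lemma Delta_inv_ring: "Delta \<in> inv_ring"
  unfolding inv_ring_def SL2_def using homog_poly_fun[OF homog_Delta] Delta_inv by auto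



lemma ex_root: assumes "0 < n" shows "\<exists>t::complex. t ^ n = z"
proof -
  have "rcis (root n (cmod z)) (Arg z / real n) ^ n = z"
    using assms by (simp add: DeMoivre2 rcis_cmod_Arg)
  thus ?thesis by blast
qed

definition tor :: "complex \<Rightarrow> (nat \<Rightarrow> complex) \<Rightarrow> (nat \<Rightarrow> complex)" where
  "tor t v = (\<lambda>k. if k = 0 then t * v 0 else if k = 1 then v 1 / t else if k = 2 then t^2 * v 2
     else if k = 3 then v 3 else if k = 4 then v 4 / t^2 else if k = 5 then t^4 * v 5
     else if k = 6 then t^2 * v 6 else if k = 7 then v 7 else if k = 8 then v 8 / t^2
     else if k = 9 then v 9 / t^4 else v k)"

lemma tor_act: assumes "t \<noteq> 0" shows "act_rel (t, 0, 0, 1/t) v (tor t v)"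
  unfolding act_rel_def form1_def form2_def form4_def binform1_eq binform2_eq binform4_eq tor_def
  using assms by (simp add: field_simps power2_eq_square power3_eq_cube power4_eq_xxxx eval_nat_numeral)

lemma inv_apply: "f \<in> inv_ring \<Longrightarrow> a * d - b * c = 1 \<Longrightarrow> act_rel (a,b,c,d) v w \<Longrightarrow> f w = f v"
  unfolding inv_ring_def SL2_def by auto

lemma tor_inv: "f \<in> inv_ring \<Longrightarrow> t \<noteq> 0 \<Longrightarrow> f (tor t v) = f v"
  using inv_apply[OF _ _ tor_act] by simp

definition PP :: "(nat \<Rightarrow> complex) \<Rightarrow> complex \<Rightarrow> (nat \<Rightarrow> complex)" where
  "PP h s = (\<lambda>k. if k = 0 then 1 else s * h k)"

definition h8 :: "nat \<Rightarrow> complex" where "h8 = (\<lambda>k. if k = 8 then 1 else 0)"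
definition h9 :: "nat \<Rightarrow> complex" where "h9 = (\<lambda>k. if k = 9 then 1 else 0)"
definition hc :: "complex \<Rightarrow> nat \<Rightarrow> complex" where
  "hc c = (\<lambda>k. if k = 5 then c^4 else if k = 6 then 4*c^3 else if k = 7 then 6*c^2
      else if k = 8 then 4*c else if k = 9 then 1 else 0)"

lemma unip_act: "act_rel (1, 0, c, 1) (PP h9 s) (PP (hc c) s)"
  unfolding act_rel_def form1_def form2_def form4_def binform1_eq binform2_eq binform4_eq PP_def h9_def hc_def
  by (simp add: algebra_simps power2_eq_square power3_eq_cube power4_eq_xxxx eval_nat_numeral)

lemma p0_eq: "p0 = PP h8 4"
  by (auto simp: p0_def PP_def h8_def)

lemma tor_h8: "t \<noteq> 0 \<Longrightarrow> tor t (PP h8 u) = (\<lambda>k. t * PP h8 (u / t^3) k)"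
  by (simp add: fun_eq_iff tor_def PP_def h8_def field_simps power2_eq_square power3_eq_cube)

lemma tor_h9: "t \<noteq> 0 \<Longrightarrow> tor t (PP h9 u) = (\<lambda>k. t * PP h9 (u / t^5) k)"
  by (simp add: fun_eq_iff tor_def PP_def h9_def field_simps power2_eq_square power3_eq_cube power4_eq_xxxx eval_nat_numeral)



lemma prod_sum_one:
  fixes h :: "nat \<Rightarrow> complex"
  assumes "finite S" "(\<Sum>i\<in>S. \<alpha> i) = (1::nat)"
  shows "(\<Prod>i\<in>S. h i ^ \<alpha> i) = (\<Sum>i\<in>S. of_nat (\<alpha> i) * h i)"
proof -
  obtain k where k: "k \<in> S" "\<alpha> k \<noteq> 0"
    using assms(2) by (metis sum.neutral zero_neq_one)
  have "(\<Sum>i\<in>S. \<alpha> i) = \<alpha> k + (\<Sum>i\<in>S - {k}. \<alpha> i)"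
    using k assms(1) by (simp add: sum.remove)
  hence ak: "\<alpha> k = 1" and z: "(\<Sum>i\<in>S - {k}. \<alpha> i) = 0" using assms(2) k by auto
  have z': "\<forall>i\<in>S - {k}. \<alpha> i = 0" using z assms(1) by simp
  have "(\<Prod>i\<in>S. h i ^ \<alpha> i) = (\<Prod>i\<in>{k}. h i ^ \<alpha> i)"
    by (rule prod.mono_neutral_cong_right) (use assms(1) k z' in auto)
  moreover have "(\<Sum>i\<in>S. of_nat (\<alpha> i) * h i) = (\<Sum>i\<in>{k}. of_nat (\<alpha> i) * h i)"
    by (rule sum.mono_neutral_cong_right) (use assms(1) k z' in auto)
  ultimately show ?thesis using ak by simp
qed

lemma rep_lemma:
  assumes "homog_poly 10 d f"
  shows "\<exists>dd. \<forall>h. \<exists>p. (\<forall>s. f (PP h s) = poly p s) \<and> coeff p 1 = (\<Sum>i\<in>{1..<10}. dd i * h i)"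
proof -
  obtain A c where A: "finite A" "\<forall>\<alpha>\<in>A. (\<forall>i\<ge>10. \<alpha> i = 0) \<and> (\<Sum>i<10. \<alpha> i) = d" "f = mono_sum 10 A c"
    using assms unfolding homog_poly_def by blast
  define m where "m \<alpha> = (\<Sum>i\<in>{1..<10::nat}. \<alpha> i)" for \<alpha> :: "nat \<Rightarrow> nat"
  define dd where "dd i = (\<Sum>\<alpha>\<in>A. if m \<alpha> = 1 then c \<alpha> * of_nat (\<alpha> i) else 0)" for i
  have "\<exists>p. (\<forall>s. f (PP h s) = poly p s) \<and> coeff p 1 = (\<Sum>i\<in>{1..<10}. dd i * h i)" for h
  proof -
    define p where "p = (\<Sum>\<alpha>\<in>A. monom (c \<alpha> * (\<Prod>i\<in>{1..<10::nat}. h i ^ \<alpha> i)) (m \<alpha>))"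
    have split: "{..<10::nat} = insert 0 {1..<10}" by auto
    have "f (PP h s) = poly p s" for s
    proof -
      have "(\<Prod>i<10. PP h s i ^ \<alpha> i) = s ^ m \<alpha> * (\<Prod>i\<in>{1..<10::nat}. h i ^ \<alpha> i)" for \<alpha>
      proof -
        have "(\<Prod>i<10. PP h s i ^ \<alpha> i) = (\<Prod>i\<in>{1..<10::nat}. PP h s i ^ \<alpha> i)"
          unfolding split by (simp add: PP_def)
        also have "\<dots> = (\<Prod>i\<in>{1..<10::nat}. s ^ \<alpha> i * h i ^ \<alpha> i)"
          by (rule prod.cong) (auto simp: PP_def power_mult_distrib)
        also have "\<dots> = s ^ m \<alpha> * (\<Prod>i\<in>{1..<10::nat}. h i ^ \<alpha> i)"
          by (simp add: prod.distrib m_def power_sum)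
        finally show ?thesis .
      qed
      thus ?thesis unfolding A(3) mono_sum_def p_def
        by (simp add: poly_sum poly_monom algebra_simps)
    qed
    moreover have "coeff p 1 = (\<Sum>i\<in>{1..<10}. dd i * h i)"
    proof -
      have "coeff p 1 = (\<Sum>\<alpha>\<in>A. if m \<alpha> = 1 then c \<alpha> * (\<Prod>i\<in>{1..<10::nat}. h i ^ \<alpha> i) else 0)"
        unfolding p_def coeff_sum coeff_monom by (rule refl)
      also have "\<dots> = (\<Sum>\<alpha>\<in>A. \<Sum>i\<in>{1..<10}. (if m \<alpha> = 1 then c \<alpha> * of_nat (\<alpha> i) else 0) * h i)"
      proof (rule sum.cong[OF refl])
        fix \<alpha> assume "\<alpha> \<in> A"
        show "(if m \<alpha> = 1 then c \<alpha> * (\<Prod>i\<in>{1..<10::nat}. h i ^ \<alpha> i) else 0)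
           = (\<Sum>i\<in>{1..<10}. (if m \<alpha> = 1 then c \<alpha> * of_nat (\<alpha> i) else 0) * h i)"
        proof (cases "m \<alpha> = 1")
          case True
          hence "(\<Prod>i\<in>{1..<10::nat}. h i ^ \<alpha> i) = (\<Sum>i\<in>{1..<10}. of_nat (\<alpha> i) * h i)"
            by (intro prod_sum_one) (auto simp: m_def)
          thus ?thesis using True by (simp add: sum_distrib_left mult.assoc)
        qed simp
      qed
      also have "\<dots> = (\<Sum>i\<in>{1..<10}. dd i * h i)"
        unfolding dd_def sum_distrib_right by (rule sum.swap)
      finally show ?thesis .
    qed
    ultimately show ?thesis by blast
  qed
  thus ?thesis by blast
qed



lemma sum_1_10: "(\<Sum>i\<in>{1..<10::nat}. g i) = g 1 + g 2 + g 3 + g 4 + g 5 + g 6 + g 7 + g 8 + g (9::nat)"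
  for g :: "nat \<Rightarrow> complex"
  by (simp add: eval_nat_numeral atLeastLessThanSuc algebra_simps)

lemma cis3: "cis (2*pi/3) ^ 3 = 1" "cis (2*pi/3) \<noteq> 1" "cis (2*pi/3) ^ 2 \<noteq> 1"
proof -
  show "cis (2*pi/3) ^ 3 = 1" by (simp add: DeMoivre)
  have "sin (2*pi/3) > 0" by (rule sin_gt_zero) auto
  thus "cis (2*pi/3) \<noteq> 1" by (auto simp: complex_eq_iff)
  have "sin (pi/3) > 0" by (rule sin_gt_zero) auto
  moreover have "sin (4*pi/3) = - sin (pi/3)"
    using sin_periodic_pi[of "pi/3"] by (simp add: algebra_simps)
  ultimately have "sin (4*pi/3) < 0" by simp
  moreover have "cis (2*pi/3) ^ 2 = cis (4*pi/3)" by (simp add: DeMoivre)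
  ultimately show "cis (2*pi/3) ^ 2 \<noteq> 1" by (auto simp: complex_eq_iff)
qed

lemma cis5: "cis (2*pi/5) ^ 5 = 1" "cis (2*pi/5) ^ 3 \<noteq> 1"
proof -
  show "cis (2*pi/5) ^ 5 = 1" by (simp add: DeMoivre)
  have "sin (pi/5) > 0" by (rule sin_gt_zero) auto
  moreover have "sin (6*pi/5) = - sin (pi/5)"
    using sin_periodic_pi[of "pi/5"] by (simp add: algebra_simps)
  ultimately have "sin (6*pi/5) < 0" by simp
  moreover have "cis (2*pi/5) ^ 3 = cis (6*pi/5)" by (simp add: DeMoivre)
  ultimately show "cis (2*pi/5) ^ 3 \<noteq> 1" by (auto simp: complex_eq_iff)
qed

lemma part2:
  assumes f: "f \<in> inv_ring" and hd: "homog_poly 10 d f" and d: "2 \<le> d" "d \<le> 5"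
  shows "f p0 = 0"
proof -
  have sc: "f (\<lambda>i. t * v i) = t ^ d * f v" for t v using homog_scale[OF hd] .
  have F0: "f (PP h8 0) = 0"
  proof -
    have "tor 2 (PP h8 0) = (\<lambda>k. 2 * PP h8 0 k)" by (simp add: fun_eq_iff tor_def PP_def)
    hence "f (PP h8 0) = 2 ^ d * f (PP h8 0)" using tor_inv[OF f, of 2 "PP h8 0"] sc by simp
    moreover have "(2::complex) ^ d \<noteq> 1"
    proof
      assume "(2::complex) ^ d = 1"
      hence "(2::nat) ^ d = 1" by (metis of_nat_eq_1_iff of_nat_numeral of_nat_power)
      thus False using d by simp
    qed
    ultimately show ?thesis by (metis mult_cancel_right1)
  qed
  show ?thesis
  proof (cases "d = 3")
    case False
    define w where "w = cis (2*pi/3)"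
    have w3: "w ^ 3 = 1" and w1: "w \<noteq> 1" and w2: "w^2 \<noteq> 1" using cis3 by (auto simp: w_def)
    have wn0: "w \<noteq> 0" using w3 by auto
    have "tor w p0 = (\<lambda>k. w * p0 k)"
      using w3 wn0 by (simp add: fun_eq_iff tor_def p0_def field_simps power2_eq_square power3_eq_cube)
    hence e: "f p0 = w ^ d * f p0" using tor_inv[OF f wn0, of p0] sc by simp
    have "w ^ d \<noteq> 1"
    proof -
      have "d = 2 \<or> d = 4 \<or> d = 5" using d False by auto
      moreover have "w ^ 4 = w" using w3 by (simp add: power_Suc eval_nat_numeral)
      moreover have "w ^ 5 = w ^ 2"
      proof -
        have "w ^ 5 = w ^ 3 * w ^ 2" by (simp flip: power_add)
        thus ?thesis using w3 by simp
      qed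
      ultimately show ?thesis using w1 w2 by auto
    qed
    thus ?thesis using e by (metis mult_cancel_right1)
  next
    case True
    define K where "K = f (PP h8 1)"
    have a: "f (PP h8 s) = s * K" for s
    proof (cases "s = 0")
      case True thus ?thesis using F0 by simp
    next
      case False
      obtain t where t: "t ^ 3 = 1 / s" using ex_root[of 3] by auto
      hence tn0: "t \<noteq> 0" using False by auto
      have "K = f (tor t (PP h8 1))" using tor_inv[OF f tn0] K_def by simp
      also have "\<dots> = t ^ 3 * f (PP h8 (1 / t^3))" unfolding tor_h8[OF tn0] sc True ..
      also have "\<dots> = f (PP h8 s) / s" using t False by simp
      finally show ?thesis using False by simp
    qed
    have b: "f (PP h9 u) = 0" for u
    proof -
      define t where "t = cis (2*pi/5)"
      have t5: "t ^ 5 = 1" and t3: "t^3 \<noteq> 1" using cis5 by (auto simp: t_def)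
      have tn0: "t \<noteq> 0" using t5 by auto
      have "f (PP h9 u) = f (tor t (PP h9 u))" using tor_inv[OF f tn0] by simp
      also have "\<dots> = t ^ 3 * f (PP h9 u)" unfolding tor_h9[OF tn0] sc True t5 by simp
      finally show ?thesis using t3 by (metis mult_cancel_right1)
    qed
    have c: "f (PP (hc c) s) = 0" for c s
      using inv_apply[OF f _ unip_act, of c s] b by simp
    obtain dd where dd: "\<And>h. \<exists>p. (\<forall>s. f (PP h s) = poly p s) \<and> coeff p 1 = (\<Sum>i\<in>{1..<10}. dd i * h i)"
      using rep_lemma[OF hd] by blast
    have "dd 8 = 0"
    proof -
      have "dd 5 * c^4 + 4 * dd 6 * c^3 + 6 * dd 7 * c^2 + 4 * dd 8 * c + dd 9 = 0" for c
      proof -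
        obtain p where p: "\<forall>s. f (PP (hc c) s) = poly p s" "coeff p 1 = (\<Sum>i\<in>{1..<10}. dd i * hc c i)"
          using dd by blast
        have "p = 0" using p(1) c poly_all_0_iff_0[of p] by simp
        thus ?thesis using p(2)[unfolded sum_1_10] by (simp add: hc_def algebra_simps)
      qed
      hence "\<forall>c. poly [:dd 9, 4 * dd 8, 6 * dd 7, 4 * dd 6, dd 5:] c = 0"
        by (simp add: algebra_simps power2_eq_square power3_eq_cube power4_eq_xxxx)
      hence "[:dd 9, 4 * dd 8, 6 * dd 7, 4 * dd 6, dd 5:] = 0" using poly_all_0_iff_0 by blast
      thus ?thesis by simp
    qed
    moreover have "dd 8 = K"
    proof -
      obtain p where p: "\<forall>s. f (PP h8 s) = poly p s" "coeff p 1 = (\<Sum>i\<in>{1..<10}. dd i * h8 i)"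
        using dd by blast
      have "poly p = poly [:0, K:]" using p(1) a by (auto simp: fun_eq_iff)
      hence "p = [:0, K:]" by (simp add: poly_eq_poly_eq_iff)
      thus ?thesis using p(2)[unfolded sum_1_10] by (simp add: h8_def)
    qed
    ultimately show ?thesis using a[of 4] p0_eq by simp
  qed
qed



lemma Delta_p0: "Delta p0 = 576"
  by (simp add: Delta_def qq0_def qq1_def qq2_def p0_def)

lemma p0_not_null: "p0 \<notin> nullcone"
  unfolding nullcone_def using Delta_inv_ring homog_Delta Delta_p0 by force

lemma monic_not_all_zero:
  fixes K :: "nat \<Rightarrow> complex"
  assumes "\<forall>z. z ^ n + (\<Sum>j<n. K j * z ^ j) = 0"
  shows False
proof -
  define P where "P = monom 1 n + (\<Sum>j<n. monom (K j) j)"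
  have "poly P z = 0" for z using assms by (simp add: P_def poly_sum poly_monom)
  hence "P = 0" using poly_all_0_iff_0 by blast
  moreover have "coeff P n = 1" by (simp add: P_def coeff_sum coeff_monom)
  ultimately show False by simp
qed

lemma part1:
  assumes "length fs = 7" "is_hsop fs" "\<forall>i<7. homog_poly 10 ([2, 2, 3, 3, 3, 4, 5] ! i) (fs ! i)"
  shows False
proof -
  have z: "(fs ! i) (\<lambda>k. t * p0 k) = 0" if "i < 7" for i t
  proof -
    have inv: "fs ! i \<in> inv_ring" using assms(1,2) that unfolding is_hsop_def by (auto simp: set_conv_nth)
    have h: "homog_poly 10 ([2, 2, 3, 3, 3, 4, 5] ! i) (fs ! i)" using assms(3) that by simp
    have dd: "2 \<le> [2, 2, 3, 3, 3, 4, 5::nat] ! i \<and> [2, 2, 3, 3, 3, 4, 5::nat] ! i \<le> 5"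
      using that by (auto simp: less_Suc_eq nth_Cons split: nat.splits)
    show ?thesis using homog_scale[OF h] part2[OF inv h] dd by simp
  qed
  obtain n cs where nc: "\<forall>j<n. cs j \<in> gen_alg fs" "\<forall>v. Delta v ^ n + (\<Sum>j<n. cs j v * Delta v ^ j) = 0"
    using assms(2) Delta_inv_ring unfolding is_hsop_def integral_over_def by blast
  have const: "cs j (\<lambda>k. t * p0 k) = cs j (\<lambda>k. 0 * p0 k)" if "j < n" for j t
  proof -
    have "cs j \<in> gen_alg fs" using nc(1) \<open>j < n\<close> by blast
    then obtain A c where "cs j = poly_comp fs A c" unfolding gen_alg_def by blast
    thus ?thesis using z z[where t=0, simplified] assms(1) unfolding poly_comp_def by simp
  qed
  define K where "K j = cs j (\<lambda>k. 0 * p0 k)" for j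
  have "z ^ n + (\<Sum>j<n. K j * z ^ j) = 0" for z
  proof -
    obtain t where t: "t ^ 6 = z / 576" using ex_root[of 6 "z / 576"] by auto
    have "Delta (\<lambda>k. t * p0 k) = z" using homog_scale[OF homog_Delta] Delta_p0 t by simp
    thus ?thesis using nc(2)[rule_format, of "\<lambda>k. t * p0 k"] const K_def by simp
  qed
  thus False using monic_not_all_zero by blast
qed

theorem mainTheorem8:
  shows "\<not> (\<exists>fs. length fs = 7 \<and> is_hsop fs
              \<and> (\<forall>i<7. homog_poly 10 ([2, 2, 3, 3, 3, 4, 5] ! i) (fs ! i)))
         \<and> (\<forall>d\<in>{2..5}. \<forall>f\<in>inv_ring. homog_poly 10 d f \<longrightarrow> f p0 = 0)
         \<and> p0 \<notin> nullcone"
proof (intro conjI)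
  show "\<not> (\<exists>fs. length fs = 7 \<and> is_hsop fs
              \<and> (\<forall>i<7. homog_poly 10 ([2, 2, 3, 3, 3, 4, 5] ! i) (fs ! i)))"
    using part1 by blast
  show "\<forall>d\<in>{2..5}. \<forall>f\<in>inv_ring. homog_poly 10 d f \<longrightarrow> f p0 = 0" using part2 by auto
  show "p0 \<notin> nullcone" by (rule p0_not_null)
qed


end
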